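(* Let $G$ be a transcendental entire function and $g = G'$. Let $\Gamma$ be a curve tending to infinity, meeting no zero of $g$, on which $\mathrm{Im}\, G(z) = \beta$ is constant ($\beta\in\mathbb{R}$) and $X = \mathrm{Re}\, G(z)$ increases as $\Gamma$ is followed towards infinity, with $X \geq \alpha$ for some $\alpha \in \mathbb{R}$. Suppose that $(z_n)$ is a sequence tending to infinity on $\Gamma$ such that $v_n = G(z_n) = X_n + i\beta$ satisfies $v_n = o(|z_n|^2)$ as $n\to\infty$. Then the trajectory of the flow $\dot z = \overline{g(z)}$ which follows $\Gamma$ takes infinite time in tending to infinity.
   Context: Trajectories of $\dot z = \overline{g(z)}$ (paths with $z'(t)=\overline{g(z(t))}$) are level curves of $\mathrm{Im}\, G$ on which $\mathrm{Re}\, G$ increases with $t$. It is not assumed that $X \to +\infty$ as $z\to\infty$ on $\Gamma$. *)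

theory Defs
  imports "HOL-Complex_Analysis.Complex_Analysis" "HOL-Library.Landau_Symbols"
begin

definition transcendental_entire :: "(complex \<Rightarrow> complex) \<Rightarrow> bool" where
  "transcendental_entire G \<longleftrightarrow> G holomorphic_on UNIV \<and> \<not> (\<exists>p. \<forall>z. G z = poly p z)"

end

theory Submission
  imports Defs
begin

lemma cs_aux: fixes u v :: complex shows "Re u * Re v + Im u * Im v \<le> cmod u * cmod v"
  using norm_cauchy_schwarz[of u v] by (simp add: inner_complex_def)

lemma sq_aux: fixes a q s :: real assumes "s > 0" "p \<le> q * a"
  shows "0 \<le> a^2 - 2 * p / s + q^2 / s^2"
proof -
  have "0 \<le> (a - q/s)^2" by simp
  also have "\<dots> = a^2 - 2 * (q*a) / s + q^2/s^2" using assms by (simp add: power2_eq_square field_simps)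
  also have "\<dots> \<le> a^2 - 2 * p / s + q^2 / s^2" using assms by (simp add: divide_right_mono)
  finally show ?thesis .
qed

lemma e_aux: fixes s c p q :: real assumes "s > 0"
  shows "c - 0 - ((2 * p * r + 2 * q * w) * s - (p ^ 2 + q ^ 2) * 1) / (s * s) = c - 2 * (p * r + q * w) / s + (p ^ 2 + q ^ 2) / s ^ 2"
  using assms by (simp add: field_simps power2_eq_square)

lemma ode_bound:
  fixes z :: "real \<Rightarrow> complex" and G :: "complex \<Rightarrow> complex"
  assumes hol: "G holomorphic_on UNIV"
    and der: "\<forall>t\<in>{0..<T}. (z has_vector_derivative cnj (deriv G (z t))) (at t within {0..<T})"
    and t: "t \<in> {0..<T}"
  shows "(cmod (z t - z 0))^2 \<le> (t+1) * (Re (G (z t)) - Re (G (z 0)))"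
proof -
  define K where "K s = Re (G (z s)) - Re (G (z 0)) - ((Re (z s - z 0))^2 + (Im (z s - z 0))^2) / (s+1)" for s
  have cz: "continuous_on {0..<T} z"
    using der by (meson continuous_on_eq_continuous_within has_vector_derivative_continuous)
  have cG: "continuous_on UNIV G" using hol holomorphic_on_imp_continuous_on by blast
  have cK: "continuous_on {0..t} K"
  proof -
    have "continuous_on {0..<T} K" unfolding K_def
      apply (intro continuous_intros cz continuous_on_compose2[OF cG cz])
      by auto
    then show ?thesis by (rule continuous_on_subset) (use t in auto)
  qed
  have "K 0 \<le> K t"
  proof (rule DERIV_nonneg_imp_increasing_open[OF _ _ cK])
    show "0 \<le> t" using t by auto
    fix x assume x: "0 < x" "x < t"
    let ?g = "deriv G (z x)"
    let ?u = "z x - z 0"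
    have zx: "(z has_vector_derivative cnj ?g) (at x)"
    proof -
      have xT: "x \<in> {0<..<T}" using x t by simp
      have "(z has_vector_derivative cnj ?g) (at x within {0..<T})"
        using der xT by simp
      then have "(z has_vector_derivative cnj ?g) (at x within {0<..<T})"
        by (rule has_vector_derivative_within_subset) auto
      then show ?thesis using has_vector_derivative_within_open[OF xT open_greaterThanLessThan] by blast
    qed
    have Gd: "(G has_field_derivative ?g) (at (z x) within z ` UNIV)"
      using hol by (auto intro: holomorphic_derivI)
    have w: "((G \<circ> z) has_vector_derivative (cnj ?g * ?g)) (at x)"
      using field_vector_diff_chain_within[of z "cnj ?g" x UNIV G ?g] zx Gd by simp
    have wR: "((\<lambda>s. Re (G (z s))) has_real_derivative (cmod ?g)^2) (at x)"
    proof -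
      have eq: "Re (cnj ?g * ?g) = (cmod ?g)^2" using cmod_power2[of ?g] by (simp add: power2_eq_square)
      have "((\<lambda>s. Re ((G \<circ> z) s)) has_real_derivative Re (cnj ?g * ?g)) (at x)"
        by (rule has_field_derivative_Re[OF w])
      then show ?thesis by (simp only: o_def eq)
    qed
    show "\<exists>y. (K has_real_derivative y) (at x) \<and> 0 \<le> y"
    proof (intro exI conjI)
      have u: "((\<lambda>s. z s - z 0) has_vector_derivative cnj ?g) (at x)"
        using zx by (auto intro!: derivative_eq_intros)
      have r: "((\<lambda>s. Re (z s - z 0)) has_real_derivative Re (cnj ?g)) (at x)"
        using has_field_derivative_Re[OF u] .
      have i: "((\<lambda>s. Im (z s - z 0)) has_real_derivative Im (cnj ?g)) (at x)"
        using has_field_derivative_Im[OF u] .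
      have D: "((\<lambda>s. (Re (z s - z 0))^2 + (Im (z s - z 0))^2) has_real_derivative
          (2 * Re ?u * Re (cnj ?g) + 2 * Im ?u * Im (cnj ?g))) (at x)"
        using DERIV_add[OF DERIV_mult[OF r r] DERIV_mult[OF i i]] by (simp add: power2_eq_square algebra_simps)
      have s1: "((\<lambda>s. s + 1) has_real_derivative 1) (at x)"
        using DERIV_add[OF DERIV_ident DERIV_const[of 1]] by simp
      have Q: "((\<lambda>s. ((Re (z s - z 0))^2 + (Im (z s - z 0))^2) / (s+1)) has_real_derivative
          ((2 * Re ?u * Re (cnj ?g) + 2 * Im ?u * Im (cnj ?g)) * (x+1) - ((Re ?u)^2 + (Im ?u)^2) * 1) / ((x+1) * (x+1))) (at x)"
        using DERIV_divide[OF D s1] x by simp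
      show "(K has_real_derivative (cmod ?g)^2 - 0 - ((2 * Re ?u * Re (cnj ?g) + 2 * Im ?u * Im (cnj ?g)) * (x+1) - ((Re ?u)^2 + (Im ?u)^2) * 1) / ((x+1) * (x+1))) (at x)"
        unfolding K_def
        by (intro DERIV_diff[OF DERIV_diff[OF wR DERIV_const] Q])
      have e: "(cmod ?g)^2 - 0 - ((2 * Re ?u * Re (cnj ?g) + 2 * Im ?u * Im (cnj ?g)) * (x+1) - ((Re ?u)^2 + (Im ?u)^2) * 1) / ((x+1) * (x+1))
          = (cmod ?g)^2 - 2 * (Re ?u * Re (cnj ?g) + Im ?u * Im (cnj ?g)) / (x+1) + (cmod ?u)^2 / (x+1)^2"
        unfolding cmod_power2 by (rule e_aux) (use x in simp)
      have cs: "Re ?u * Re (cnj ?g) + Im ?u * Im (cnj ?g) \<le> cmod ?u * cmod ?g"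
        using cs_aux[of ?u "cnj ?g"] by simp
      show "0 \<le> (cmod ?g)^2 - 0 - ((2 * Re ?u * Re (cnj ?g) + 2 * Im ?u * Im (cnj ?g)) * (x+1) - ((Re ?u)^2 + (Im ?u)^2) * 1) / ((x+1) * (x+1))"
        unfolding e using sq_aux[OF _ cs, of "x+1"] x by simp
    qed
  qed
  moreover have "K 0 = 0" unfolding K_def by simp
  ultimately have "(cmod (z t - z 0))^2 / (t+1) \<le> Re (G (z t)) - Re (G (z 0))"
    unfolding K_def cmod_power2 by simp
  then show ?thesis using t by (simp add: divide_le_eq mult.commute)
qed

lemma gamma_const:
  fixes G :: "complex \<Rightarrow> complex" and \<gamma> :: "real \<Rightarrow> complex"
  assumes hol: "G holomorphic_on UNIV"
    and \<gamma>_cont: "continuous_on {0..} \<gamma>"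
    and no_zero: "\<forall>s\<ge>0. deriv G (\<gamma> s) \<noteq> 0"
    and level: "\<forall>s\<ge>0. Im (G (\<gamma> s)) = \<beta>"
    and incr: "mono_on {0..} (\<lambda>s. Re (G (\<gamma> s)))"
    and ab: "0 \<le> a" "a \<le> b"
    and eq: "Re (G (\<gamma> a)) = Re (G (\<gamma> b))"
  shows "\<gamma> a = \<gamma> b"
proof -
  have eqG: "G (\<gamma> s) = G (\<gamma> a)" if s: "s \<in> {a..b}" for s
  proof (rule complex_eqI)
    have "Re (G (\<gamma> a)) \<le> Re (G (\<gamma> s))" "Re (G (\<gamma> s)) \<le> Re (G (\<gamma> b))"
      using incr s ab by (auto intro!: mono_onD[OF incr])
    then show "Re (G (\<gamma> s)) = Re (G (\<gamma> a))" using eq by simp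
    show "Im (G (\<gamma> s)) = Im (G (\<gamma> a))" using level s ab by simp
  qed
  have "\<gamma> constant_on {a..b}"
  proof (rule continuous_discrete_range_constant)
    show "connected {a..b}" by simp
    show "continuous_on {a..b} \<gamma>" by (rule continuous_on_subset[OF \<gamma>_cont]) (use ab in auto)
    fix x assume x: "x \<in> {a..b}"
    obtain r where r: "r > 0" "inj_on G (ball (\<gamma> x) r)"
      using has_complex_derivative_locally_injective[OF hol, of "\<gamma> x"] no_zero x ab by auto
    show "\<exists>e>0. \<forall>y. y \<in> {a..b} \<and> \<gamma> y \<noteq> \<gamma> x \<longrightarrow> e \<le> norm (\<gamma> y - \<gamma> x)"
    proof (intro exI conjI allI impI)
      show "r > 0" by fact
      fix y assume y: "y \<in> {a..b} \<and> \<gamma> y \<noteq> \<gamma> x"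
      show "r \<le> norm (\<gamma> y - \<gamma> x)"
      proof (rule ccontr)
        assume "\<not> r \<le> norm (\<gamma> y - \<gamma> x)"
        then have "\<gamma> y \<in> ball (\<gamma> x) r" by (simp add: dist_norm norm_minus_commute)
        moreover have "\<gamma> x \<in> ball (\<gamma> x) r" using r by simp
        moreover have "G (\<gamma> y) = G (\<gamma> x)" using eqG x y by metis
        ultimately have "\<gamma> y = \<gamma> x" using r(2) by (meson inj_onD)
        then show False using y by simp
      qed
    qed
  qed
  then show ?thesis using ab unfolding constant_on_def by force
qed

theorem proposition4p1:
  fixes G :: "complex \<Rightarrow> complex" and \<gamma> :: "real \<Rightarrow> complex"
    and \<alpha> \<beta> :: real and zs :: "nat \<Rightarrow> complex"
  assumes G: "transcendental_entire G"
    and \<gamma>_cont: "continuous_on {0..} \<gamma>"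
    and \<gamma>_inf: "filterlim \<gamma> at_infinity at_top"
    and no_zero: "\<forall>s\<ge>0. deriv G (\<gamma> s) \<noteq> 0"
    and level: "\<forall>s\<ge>0. Im (G (\<gamma> s)) = \<beta>"
    and incr: "mono_on {0..} (\<lambda>s. Re (G (\<gamma> s)))"
    and lower: "\<forall>s\<ge>0. Re (G (\<gamma> s)) \<ge> \<alpha>"
    and zs_on: "\<forall>n. zs n \<in> \<gamma> ` {0..}"
    and zs_inf: "filterlim zs at_infinity sequentially"
    and small: "(\<lambda>n. cmod (G (zs n))) \<in> o(\<lambda>n. (cmod (zs n))^2)"
  shows "\<not> (\<exists>T::real. \<exists>z::real \<Rightarrow> complex. T > 0 \<and>
            (\<forall>t\<in>{0..<T}. (z has_vector_derivative cnj (deriv G (z t))) (at t within {0..<T})) \<and>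
            (\<forall>t\<in>{0..<T}. z t \<in> \<gamma> ` {0..}) \<and>
            filterlim z at_infinity (at_left T))"
proof
  assume "\<exists>T::real. \<exists>z::real \<Rightarrow> complex. T > 0 \<and>
            (\<forall>t\<in>{0..<T}. (z has_vector_derivative cnj (deriv G (z t))) (at t within {0..<T})) \<and>
            (\<forall>t\<in>{0..<T}. z t \<in> \<gamma> ` {0..}) \<and>
            filterlim z at_infinity (at_left T)"
  then obtain T z where T: "T > 0"
    and der: "\<forall>t\<in>{0..<T}. (z has_vector_derivative cnj (deriv G (z t))) (at t within {0..<T})"
    and zon: "\<forall>t\<in>{0..<T}. z t \<in> \<gamma> ` {0..}"
    and zinf: "filterlim z at_infinity (at_left T)" by blast
  have hol: "G holomorphic_on UNIV" using G unfolding transcendental_entire_def by blast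
  have cz: "continuous_on {0..<T} z"
    using der by (meson continuous_on_eq_continuous_within has_vector_derivative_continuous)
  have cG: "continuous_on UNIV G" using hol holomorphic_on_imp_continuous_on by blast
  define c0 where "c0 = cmod (z 0)"
  define A0 where "A0 = Re (G (z 0))"
  define C where "C = cmod (G (z 0))"
  have A0C: "- A0 \<le> C" unfolding A0_def C_def using abs_Re_le_cmod[of "G (z 0)"] by linarith
  have C0: "C \<ge> 0" unfolding C_def by simp
  have key: "(cmod (z t - z 0))^2 \<le> (T+1) * (Re (G (z t)) - A0)" if t: "t \<in> {0..<T}" for t
  proof -
    have 1: "(cmod (z t - z 0))^2 \<le> (t+1) * (Re (G (z t)) - A0)"
      using ode_bound[OF hol der t] unfolding A0_def .
    have "0 \<le> (t+1) * (Re (G (z t)) - A0)" using 1 by (meson order_trans zero_le_power2)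
    then have "Re (G (z t)) - A0 \<ge> 0" using t by (simp add: zero_le_mult_iff)
    then have "(t+1) * (Re (G (z t)) - A0) \<le> (T+1) * (Re (G (z t)) - A0)"
      using t by (intro mult_right_mono) auto
    then show ?thesis using 1 by linarith
  qed
  obtain \<sigma>0 where \<sigma>0: "\<sigma>0 \<ge> 0" "z 0 = \<gamma> \<sigma>0" using zon T by force
  have "compact (\<gamma> ` {0..\<sigma>0})"
    by (rule compact_continuous_image[OF continuous_on_subset[OF \<gamma>_cont]]) auto
  then obtain B where B: "\<forall>x\<in>\<gamma> ` {0..\<sigma>0}. cmod x \<le> B"
    using compact_imp_bounded bounded_iff by metis
  define \<epsilon> where "\<epsilon> = 1 / (16 * (T+1))"
  have \<epsilon>: "\<epsilon> > 0" using T by (simp add: \<epsilon>_def)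
  define R where "R = max (B+1) (max (2*c0) (16*(T+1)*C + 1))"
  have ev1: "eventually (\<lambda>n. cmod (G (zs n)) \<le> \<epsilon> * (cmod (zs n))^2) sequentially"
    using landau_o.smallD[OF small \<epsilon>] by simp
  have ev2: "eventually (\<lambda>n. R \<le> cmod (zs n)) sequentially"
    using filterlim_at_infinity_imp_norm_at_top[OF zs_inf] unfolding filterlim_at_top by blast
  obtain n where n1: "cmod (G (zs n)) \<le> \<epsilon> * (cmod (zs n))^2" and n2: "R \<le> cmod (zs n)"
    using eventually_conj[OF ev1 ev2] unfolding eventually_sequentially by blast
  obtain sn where sn: "sn \<ge> 0" "zs n = \<gamma> sn" using zs_on by force
  have "sn > \<sigma>0"
  proof (rule ccontr)
    assume "\<not> sn > \<sigma>0"
    then have "cmod (zs n) \<le> B" using B sn by auto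
    then show False using n2 unfolding R_def by linarith
  qed
  define Xn where "Xn = Re (G (zs n))"
  have A0X: "A0 \<le> Xn" unfolding A0_def Xn_def \<sigma>0 sn
    using \<open>sn > \<sigma>0\<close> \<sigma>0 by (intro mono_onD[OF incr]) auto
  define M where "M = (T+1) * \<bar>Xn - A0\<bar> + 1"
  have M1: "M \<ge> 1" unfolding M_def using T by simp
  have "eventually (\<lambda>t. c0 + M \<le> cmod (z t)) (at_left T)"
    using filterlim_at_infinity_imp_norm_at_top[OF zinf] unfolding filterlim_at_top by blast
  then obtain b where b: "b < T" "\<forall>y>b. y < T \<longrightarrow> c0 + M \<le> cmod (z y)"
    using eventually_at_left[of 0 T] T by auto
  define t1 where "t1 = (max b 0 + T) / 2"
  have t1: "t1 \<in> {0..<T}" "b < t1" using b T unfolding t1_def by auto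
  have "c0 + M \<le> cmod (z t1)" using b t1 by auto
  then have "M \<le> cmod (z t1 - z 0)" unfolding c0_def using norm_triangle_ineq2[of "z t1" "z 0"] by linarith
  then have "M^2 \<le> (cmod (z t1 - z 0))^2" using M1 by (intro power_mono) auto
  also have "\<dots> \<le> (T+1) * (Re (G (z t1)) - A0)" using key t1 by blast
  finally have "M^2 \<le> (T+1) * (Re (G (z t1)) - A0)" .
  moreover have "M \<le> M^2" using M1 by (simp add: power2_eq_square)
  ultimately have "(T+1) * \<bar>Xn - A0\<bar> \<le> (T+1) * (Re (G (z t1)) - A0)" unfolding M_def by linarith
  then have "\<bar>Xn - A0\<bar> \<le> Re (G (z t1)) - A0" using T by simp
  then have X1: "Xn \<le> Re (G (z t1))" by linarith
  have cf: "continuous_on {0..t1} (\<lambda>t. Re (G (z t)))"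
  proof -
    have "continuous_on {0..<T} (\<lambda>t. Re (G (z t)))"
      by (intro continuous_intros continuous_on_compose2[OF cG cz]) auto
    then show ?thesis by (rule continuous_on_subset) (use t1 in auto)
  qed
  obtain tn where tn: "0 \<le> tn" "tn \<le> t1" "Re (G (z tn)) = Xn"
    using IVT'[of "\<lambda>t. Re (G (z t))" 0 Xn t1, OF _ X1 _ cf] A0X t1 unfolding A0_def by auto
  have tnT: "tn \<in> {0..<T}" using tn t1 by auto
  obtain \<sigma> where \<sigma>: "\<sigma> \<ge> 0" "z tn = \<gamma> \<sigma>" using zon tnT by force
  have "\<gamma> (min \<sigma> sn) = \<gamma> (max \<sigma> sn)"
  proof (rule gamma_const[OF hol \<gamma>_cont no_zero level incr])
    show "0 \<le> min \<sigma> sn" using \<sigma> sn by simp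
    show "min \<sigma> sn \<le> max \<sigma> sn" by simp
    have "Re (G (\<gamma> \<sigma>)) = Re (G (\<gamma> sn))" using tn \<sigma> sn unfolding Xn_def by simp
    then show "Re (G (\<gamma> (min \<sigma> sn))) = Re (G (\<gamma> (max \<sigma> sn)))"
      by (cases "\<sigma> \<le> sn") (auto simp: min_def max_def)
  qed
  then have "\<gamma> \<sigma> = \<gamma> sn" by (cases "\<sigma> \<le> sn") (auto simp: min_def max_def)
  then have ztn: "z tn = zs n" using \<sigma> sn by simp
  define r where "r = cmod (zs n)"
  have "(cmod (zs n - z 0))^2 \<le> (T+1) * (Xn - A0)" using key[OF tnT] ztn unfolding Xn_def by simp
  also have "\<dots> \<le> (T+1) * (\<epsilon> * r^2 + C)"
  proof -
    have "Xn \<le> cmod (G (zs n))" unfolding Xn_def by (rule complex_Re_le_cmod)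
    then have "Xn - A0 \<le> \<epsilon> * r^2 + C" using n1 A0C unfolding r_def by linarith
    then show ?thesis using T by (intro mult_left_mono) auto
  qed
  also have "\<dots> = r^2 / 16 + (T+1) * C" unfolding \<epsilon>_def using T by (simp add: field_simps)
  finally have ineq: "(cmod (zs n - z 0))^2 \<le> r^2 / 16 + (T+1) * C" .
  have r2: "r \<ge> 2 * c0" "r \<ge> 16*(T+1)*C + 1" using n2 unfolding R_def r_def by auto
  have "r / 2 \<le> cmod (zs n - z 0)" using norm_triangle_ineq2[of "zs n" "z 0"] r2 unfolding r_def c0_def by linarith
  then have "(r/2)^2 \<le> (cmod (zs n - z 0))^2" using r2 unfolding r_def by (intro power_mono) auto
  with ineq have "r^2/4 \<le> r^2/16 + (T+1) * C" by (simp add: power_divide)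
  then have "3 * r^2 \<le> 16 * (T+1) * C" by (simp add: algebra_simps)
  moreover have "r \<le> r^2"
  proof -
    have "0 \<le> 16*(T+1)*C" using C0 T by simp
    then have "1 \<le> r" using r2 by linarith
    then have "r * 1 \<le> r * r" by (intro mult_left_mono) auto
    then show ?thesis by (simp add: power2_eq_square)
  qed
  ultimately show False using r2(2) C0 T
  proof -
    assume a: "3 * r^2 \<le> 16 * (T+1) * C" "r \<le> r^2" "16*(T+1)*C + 1 \<le> r"
    define K where "K = 16 * (T+1) * C"
    have "0 \<le> K" unfolding K_def using C0 T by simp
    with a show False unfolding K_def[symmetric] by linarith
  qed
qed

end
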